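(* Let $c\in(0,1)$ and let $\sigma>0$ satisfy $C_{\mathrm{BS}}(\sigma)=c$. Let $$U_{23}(c)=H\!\left(\min\left(\frac{1+c}{2},\; c+e^k\,\Phi(-\sqrt{2k})\right)\right)\quad\text{and}\quad L_{U23}(c)=d_1^{-1}\!\left(\Phi^{-1}\!\left(\frac{c}{C_{\mathcal D}(U_{23}(c))}\right)\right).$$ Then $L_{U23}(c)\le\sigma$.
   Context: Fix $k\ge 0$. Let $\Phi$ and $\phi$ denote the standard normal distribution function and density. For $\sigma>0$ put $d_1(\sigma)=-k/\sigma+\sigma/2$, $d_2(\sigma)=-k/\sigma-\sigma/2$, and $C_{\mathrm{BS}}(\sigma)=\Phi(d_1(\sigma))-e^k\,\Phi(d_2(\sigma))$, a strictly increasing bijection from $(0,\infty)$ onto $(0,1)$; for $c\in(0,1)$ the implied volatility is the unique $\sigma>0$ with $C_{\mathrm{BS}}(\sigma)=c$. For $c<\mathcal D<1$ define $H(\mathcal D)=\Phi^{-1}(\mathcal D)-\Phi^{-1}\!\left(\frac{\mathcal D-c}{e^k}\right)$. The price-to-delta ratio is $C_{\mathcal D}(y)=C_{\mathrm{BS}}(y)/\Phi(d_1(y))$. The function $d_1^{-1}(x)=x+\sqrt{x^2+2k}$ (which equals $2\max(x,0)$ when $k=0$) is the inverse of $d_1$. *)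

theory Defs
  imports "HOL-Probability.Probability"
begin

definition Phi :: "real \<Rightarrow> real" where
  "Phi x = (LBINT t:{..x}. std_normal_density t)"

definition Phi_inv :: "real \<Rightarrow> real" where
  "Phi_inv p = (THE x. Phi x = p)"

definition d1 :: "real \<Rightarrow> real \<Rightarrow> real" where
  "d1 k s = - k / s + s / 2"

definition d2 :: "real \<Rightarrow> real \<Rightarrow> real" where
  "d2 k s = - k / s - s / 2"

definition C_BS :: "real \<Rightarrow> real \<Rightarrow> real" where
  "C_BS k s = Phi (d1 k s) - exp k * Phi (d2 k s)"

definition H :: "real \<Rightarrow> real \<Rightarrow> real \<Rightarrow> real" where
  "H k c D = Phi_inv D - Phi_inv ((D - c) / exp k)"

definition C_D :: "real \<Rightarrow> real \<Rightarrow> real" where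
  "C_D k y = C_BS k y / Phi (d1 k y)"

definition d1_inv :: "real \<Rightarrow> real \<Rightarrow> real" where
  "d1_inv k x = x + sqrt (x\<^sup>2 + 2 * k)"

definition U23 :: "real \<Rightarrow> real \<Rightarrow> real" where
  "U23 k c = H k c (min ((1 + c) / 2) (c + exp k * Phi (- sqrt (2 * k))))"

definition L_U23 :: "real \<Rightarrow> real \<Rightarrow> real" where
  "L_U23 k c = d1_inv k (Phi_inv (c / C_D k (U23 k c)))"

end

theory Submission imports Defs "HOL-Real_Asymp.Real_Asymp" begin

abbreviation phi where "phi \<equiv> std_normal_density"

lemma phi_setint: "A \<in> sets lborel \<Longrightarrow> set_integrable lborel A phi"
  by (rule set_integrable_subset[of _ UNIV]) (simp_all add: set_integrable_def)

lemma Phi_split: assumes "x \<le> y" shows "Phi y = Phi x + (LBINT t:{x<..y}. phi t)"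
proof -
  have "{..y} = {..x} \<union> {x<..y}" using assms by auto
  then show ?thesis unfolding Phi_def
    by (simp only:) (rule set_integral_Un, auto intro: phi_setint)
qed

lemma Phi_eq: "Phi u = Phi c + (LBINT t=c..u. phi t)"
proof (cases "c \<le> u")
  case True
  have "(LBINT t=c..u. phi t) = (LBINT t:{c<..u}. phi t)" by (rule interval_integral_Ioc) (simp add: True)
  then show ?thesis using Phi_split[OF True] by linarith
next
  case False
  then have "u \<le> c" by simp
  have "(LBINT t=u..c. phi t) = (LBINT t:{u<..c}. phi t)" by (rule interval_integral_Ioc) (simp add: \<open>u \<le> c\<close>)
  then show ?thesis using Phi_split[OF \<open>u \<le> c\<close>]
      interval_integral_endpoints_reverse[of c u phi] by linarith
qed

lemma phi_cont: "continuous_on A phi"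
  unfolding std_normal_density_def by (intro continuous_intros) auto

lemma Phi_deriv: "(Phi has_real_derivative phi x) (at x)"
proof -
  have "((\<lambda>u. LBINT y=x..u. phi y) has_vector_derivative (phi x)) (at x within {x-1..x+1})"
    by (rule interval_integral_FTC2) (simp_all add: phi_cont)
  then have "((\<lambda>u. LBINT y=x..u. phi y) has_real_derivative (phi x)) (at x)"
    by (simp add: at_within_Icc_at has_real_derivative_iff_has_vector_derivative)
  then have "((\<lambda>u. Phi x + (LBINT y=x..u. phi y)) has_real_derivative (phi x)) (at x)"
    by (auto intro!: derivative_eq_intros)
  moreover have "(\<lambda>u. Phi x + (LBINT y=x..u. phi y)) = Phi" by (rule ext) (rule Phi_eq[symmetric])
  ultimately show ?thesis by simp
qed

lemma Phi_deriv_chain[derivative_intros]: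
  "(f has_real_derivative f') (at x within s) \<Longrightarrow> ((\<lambda>x. Phi (f x)) has_real_derivative phi (f x) * f') (at x within s)"
  using DERIV_chain2[OF Phi_deriv] by blast

lemma Phi_cont[continuous_intros]: "isCont Phi x"
  using Phi_deriv DERIV_isCont by blast

lemma Phi_strict_mono: "x < y \<Longrightarrow> Phi x < Phi y"
proof (rule DERIV_pos_imp_increasing[of x y Phi])
  fix z show "\<exists>d. (Phi has_real_derivative d) (at z) \<and> 0 < d"
    using Phi_deriv[of z] normal_density_pos[of 1 0 z] by auto
qed

lemma Phi_mono: "x \<le> y \<Longrightarrow> Phi x \<le> Phi y"
  using Phi_strict_mono by (cases "x = y") (auto simp: less_le)

lemma Phi_lim_top: "(Phi \<longlongrightarrow> 1) at_top"
proof (rule tendsto_at_topI_sequentially)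
  fix X :: "nat \<Rightarrow> real" assume X: "filterlim X at_top sequentially"
  have "(\<lambda>n. integral\<^sup>L lborel (\<lambda>t. indicator {..X n} t *\<^sub>R phi t)) \<longlonglongrightarrow> integral\<^sup>L lborel phi"
  proof (rule integral_dominated_convergence[where w=phi])
    show "AE x in lborel. (\<lambda>n. indicator {..X n} x *\<^sub>R phi x) \<longlonglongrightarrow> phi x"
    proof
      fix x
      from X have "eventually (\<lambda>n. x \<le> X n) sequentially"
        unfolding filterlim_at_top_ge[where c=x] by auto
      then show "(\<lambda>n. indicator {..X n} x *\<^sub>R phi x) \<longlonglongrightarrow> phi x"
        by (intro tendsto_eventually) (auto split: split_indicator elim!: eventually_mono)
    qed
  qed (auto split: split_indicator)
  then show "(\<lambda>n. Phi (X n)) \<longlonglongrightarrow> 1"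
    by (simp add: Phi_def set_lebesgue_integral_def)
qed

lemma Phi_lim_bot: "(Phi \<longlongrightarrow> 0) at_bot"
proof (rule tendsto_at_botI_sequentially)
  fix X :: "nat \<Rightarrow> real" assume X: "filterlim X at_bot sequentially"
  have "(\<lambda>n. integral\<^sup>L lborel (\<lambda>t. indicator {..X n} t *\<^sub>R phi t)) \<longlonglongrightarrow> integral\<^sup>L lborel (\<lambda>t. indicator {} t *\<^sub>R phi t)"
  proof (rule integral_dominated_convergence[where w=phi])
    show "AE x in lborel. (\<lambda>n. indicator {..X n} x *\<^sub>R phi x) \<longlonglongrightarrow> indicator {} x *\<^sub>R phi x"
    proof
      fix x
      from X have "eventually (\<lambda>n. X n \<le> x - 1) sequentially"
        unfolding filterlim_at_bot_le[where c=x] by auto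
      then show "(\<lambda>n. indicator {..X n} x *\<^sub>R phi x) \<longlonglongrightarrow> indicator {} x *\<^sub>R phi x"
        by (intro tendsto_eventually) (auto split: split_indicator elim!: eventually_mono)
    qed
  qed (auto split: split_indicator)
  then show "(\<lambda>n. Phi (X n)) \<longlonglongrightarrow> 0"
    by (simp add: Phi_def set_lebesgue_integral_def)
qed

lemma Phi_le1: "Phi x \<le> 1"
proof (rule tendsto_lowerbound[OF Phi_lim_top])
  show "\<forall>\<^sub>F y in at_top. Phi x \<le> Phi y"
    using eventually_ge_at_top[of x] by eventually_elim (rule Phi_mono)
qed simp

lemma Phi_ge0: "0 \<le> Phi x"
proof (rule tendsto_upperbound[OF Phi_lim_bot])
  show "\<forall>\<^sub>F y in at_bot. Phi y \<le> Phi x"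
    using eventually_le_at_bot[of x] by eventually_elim (rule Phi_mono)
qed simp

lemma Phi_pos: "0 < Phi x" using Phi_ge0[of "x-1"] Phi_strict_mono[of "x-1" x] by simp
lemma Phi_lt1: "Phi x < 1" using Phi_le1[of "x+1"] Phi_strict_mono[of x "x+1"] by simp

lemma Phi_surj: assumes "0 < p" "p < 1" shows "\<exists>x. Phi x = p"
proof -
  from order_tendstoD(2)[OF Phi_lim_bot assms(1)] obtain a where a: "Phi a < p"
    by (auto simp: eventually_at_bot_linorder)
  from order_tendstoD(1)[OF Phi_lim_top assms(2)] obtain b where b: "p < Phi b"
    by (auto simp: eventually_at_top_linorder)
  have "a \<le> b" using a b Phi_mono[of b a] by (cases "a \<le> b") auto
  then show ?thesis using IVT[of Phi a p b] a b Phi_cont by force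
qed

lemma Phi_inj: "Phi x = Phi y \<Longrightarrow> x = y"
  using Phi_strict_mono by (metis linorder_neqE_linordered_idom less_irrefl)

lemma Phi_Phi_inv: assumes "0 < p" "p < 1" shows "Phi (Phi_inv p) = p"
proof -
  obtain x where "Phi x = p" using Phi_surj assms by blast
  then have "Phi_inv p = x" unfolding Phi_inv_def by (rule the_equality, auto intro: Phi_inj)
  then show ?thesis using \<open>Phi x = p\<close> by simp
qed

lemma Phi_inv_Phi: "Phi_inv (Phi x) = x"
  unfolding Phi_inv_def by (rule the_equality, auto intro: Phi_inj)

lemma Phi_inv_mono: assumes "0 < p" "p \<le> q" "q < 1" shows "Phi_inv p \<le> Phi_inv q"
  using Phi_strict_mono[of "Phi_inv q" "Phi_inv p"] Phi_Phi_inv[of p] Phi_Phi_inv[of q] assms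
  by fastforce



lemma phi_minus[simp]: "phi (- x) = phi x"
  by (simp add: std_normal_density_def)

lemma phi_deriv: "(phi has_real_derivative (- x * phi x)) (at x)"
proof -
  have "((\<lambda>x. exp (- x\<^sup>2 / 2)) has_real_derivative exp (- x\<^sup>2 / 2) * (- x)) (at x)"
    by (auto intro!: derivative_eq_intros)
  then have "((\<lambda>x. (1 / sqrt (2 * pi)) * exp (- x\<^sup>2 / 2)) has_real_derivative (1 / sqrt (2 * pi)) * (exp (- x\<^sup>2 / 2) * (- x))) (at x)"
    by (rule DERIV_cmult)
  then show ?thesis unfolding std_normal_density_def[abs_def] by (simp add: mult_ac)
qed

lemma phi_deriv_chain[derivative_intros]:
  "(f has_real_derivative f') (at x within s) \<Longrightarrow> ((\<lambda>x. phi (f x)) has_real_derivative (- f x * phi (f x)) * f') (at x within s)"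
  using DERIV_chain2[OF phi_deriv] by blast

lemma phi_shift: "phi (x - t) = phi x * exp (x*t - t^2/2)"
proof -
  have "- (x - t)\<^sup>2 / 2 = - x\<^sup>2 / 2 + (x*t - t^2/2)" by (simp add: power2_eq_square field_simps)
  then have "exp (- (x - t)\<^sup>2 / 2) = exp (- x\<^sup>2 / 2) * exp (x*t - t^2/2)"
    by (simp only: exp_add[symmetric])
  then show ?thesis by (simp add: std_normal_density_def)
qed

lemma phi_d1d2: assumes "y > 0" shows "exp k * phi (d2 k y) = phi (d1 k y)"
proof -
  have "d2 k y = d1 k y - y" unfolding d1_def d2_def by simp
  moreover have "d1 k y * y - y^2/2 = -k" unfolding d1_def using assms by (simp add: power2_eq_square field_simps)
  ultimately have "phi (d2 k y) = phi (d1 k y) * exp (-k)" using phi_shift[of "d1 k y" y] by simp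
  then show ?thesis by (simp add: exp_minus)
qed

lemma G_bound: assumes "y > 0" shows "Phi x - exp k * Phi (x - y) \<le> C_BS k y"
proof -
  define g where "g x = Phi x - exp k * Phi (x - y)" for x
  have der: "(g has_real_derivative phi x * (1 - exp (k + x*y - y^2/2))) (at x)" for x
  proof -
    have "(g has_real_derivative phi x - exp k * phi (x - y)) (at x)"
      unfolding g_def by (auto intro!: derivative_eq_intros)
    moreover have "exp (k + x*y - y^2/2) = exp k * exp (x*y - y^2/2)" by (simp add: exp_add[symmetric])
    then have "phi x - exp k * phi (x - y) = phi x * (1 - exp (k + x*y - y^2/2))"
      by (simp add: phi_shift algebra_simps)
    ultimately show ?thesis by simp
  qed
  let ?d = "d1 k y"
  have dy: "?d * y = -k + y^2/2" unfolding d1_def using assms by (simp add: power2_eq_square field_simps)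
  have "g x \<le> g ?d"
  proof (cases "x \<le> ?d")
    case True
    show ?thesis
    proof (rule DERIV_nonneg_imp_nondecreasing[OF True])
      fix z assume "x \<le> z" "z \<le> ?d"
      then have "z * y \<le> ?d * y" using assms by (intro mult_right_mono) auto
      then have "k + z*y - y^2/2 \<le> 0" using dy by linarith
      then have "exp (k + z*y - y^2/2) \<le> 1" by simp
      then show "\<exists>d. (g has_real_derivative d) (at z) \<and> 0 \<le> d"
        using der[of z] by (intro exI[of _ "phi z * (1 - exp (k + z*y - y^2/2))"]) simp
    qed
  next
    case False
    show ?thesis
    proof (rule DERIV_nonpos_imp_nonincreasing[of ?d x])
      show "?d \<le> x" using False by simp
      fix z assume "?d \<le> z" "z \<le> x"
      then have "z * y \<ge> ?d * y" using assms by (intro mult_right_mono) auto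
      then have "k + z*y - y^2/2 \<ge> 0" using dy by linarith
      then have "exp (k + z*y - y^2/2) \<ge> 1" by simp
      then show "\<exists>d. (g has_real_derivative d) (at z) \<and> d \<le> 0"
        using der[of z] by (intro exI[of _ "phi z * (1 - exp (k + z*y - y^2/2))"])
          (simp add: mult_nonneg_nonpos)
    qed
  qed
  moreover have "g ?d = C_BS k y" unfolding g_def C_BS_def d1_def d2_def by (simp add: algebra_simps)
  ultimately show ?thesis unfolding g_def by simp
qed

lemma mills_h: "w * phi w < Phi (- w) * (1 + w^2)"
proof -
  define h where "h w = Phi (- w) - w * phi w / (1 + w^2)" for w
  have pos: "1 + w^2 > 0" for w :: real by (simp add: add_pos_nonneg)
  have der: "(h has_real_derivative - 2 * phi w / (1 + w^2)^2) (at w)" for w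
  proof -
    have "(h has_real_derivative phi (- w) * (- 1) - ((1 * phi w + w * (- w * phi w * 1)) * (1 + w^2) - w * phi w * (0 + 2 * w^1 * 1)) / ((1 + w^2) * (1 + w^2))) (at w)"
      unfolding h_def using pos[of w]
      by (intro derivative_intros DERIV_divide) (auto intro!: derivative_eq_intros)
    have N: "(1 * phi w + w * (- w * phi w * 1)) * (1 + w^2) - w * phi w * (0 + 2 * w^1 * 1) = phi w * 2 - phi w * ((1 + w^2) * (1 + w^2))"
      by (simp add: algebra_simps power2_eq_square)
    have "phi (- w) * (- 1) - ((1 * phi w + w * (- w * phi w * 1)) * (1 + w^2) - w * phi w * (0 + 2 * w^1 * 1)) / ((1 + w^2) * (1 + w^2))
       = - phi w - (phi w * 2 - phi w * ((1 + w^2) * (1 + w^2))) / ((1 + w^2) * (1 + w^2))" by (simp only: N) simp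
    also have "\<dots> = - 2 * phi w / (1 + w^2)^2"
      using pos[of w] by (simp add: diff_divide_distrib power2_eq_square[of "1+w^2"])
    finally have "phi (- w) * (- 1) - ((1 * phi w + w * (- w * phi w * 1)) * (1 + w^2) - w * phi w * (0 + 2 * w^1 * 1)) / ((1 + w^2) * (1 + w^2)) = - 2 * phi w / (1 + w^2)^2" .
    moreover note \<open>(h has_real_derivative _) (at w)\<close>
    ultimately show ?thesis by simp
  qed
  have lim1: "((\<lambda>w. Phi (- w)) \<longlongrightarrow> 0) at_top"
    by (rule filterlim_compose[OF Phi_lim_bot filterlim_uminus_at_bot_at_top])
  have lim2: "((\<lambda>w. w * phi w / (1 + w^2)) \<longlongrightarrow> 0) at_top"
    unfolding std_normal_density_def by real_asymp
  have lim: "(h \<longlongrightarrow> 0) at_top" unfolding h_def using tendsto_diff[OF lim1 lim2] by simp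
  have "0 < h w"
  proof (rule DERIV_neg_imp_decreasing_at_top[OF _ lim])
    fix x assume "w \<le> x"
    have "0 < 2 * phi x / (1 + x^2)^2" using normal_density_pos[of 1 0 x] pos[of x] by simp
    then show "\<exists>y. (h has_real_derivative y) (at x) \<and> y < 0"
      using der[of x] by (intro exI[of _ "- 2 * phi x / (1 + x^2)^2"]) simp
  qed
  then show ?thesis unfolding h_def using pos[of w] by (simp add: field_simps)
qed


lemma M_mono: assumes "w1 \<le> w2"
  shows "w1 * Phi (- w1) * exp (w1^2/2) \<le> w2 * Phi (- w2) * exp (w2^2/2)"
proof (rule DERIV_nonneg_imp_nondecreasing[OF assms])
  fix w
  have "((\<lambda>w. w * Phi (- w) * exp (w^2/2)) has_real_derivative exp (w^2/2) * (Phi (- w) * (1 + w^2) - w * phi w)) (at w)"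
    by (auto intro!: derivative_eq_intros simp: algebra_simps power2_eq_square)
  moreover have "0 \<le> exp (w^2/2) * (Phi (- w) * (1 + w^2) - w * phi w)"
    using mills_h[of w] by simp
  ultimately show "\<exists>d. ((\<lambda>w. w * Phi (- w) * exp (w^2/2)) has_real_derivative d) (at w) \<and> 0 \<le> d"
    by blast
qed

lemma sign_key: assumes "y > 0" "k \<ge> 0"
  shows "0 \<le> Phi (d1 k y) * d1 k y - exp k * Phi (d2 k y) * d2 k y"
proof -
  have "k / y \<ge> 0" using assms by simp
  then have d2neg: "d2 k y < 0" unfolding d2_def using assms by linarith
  have diff: "d2 k y = d1 k y - y" unfolding d1_def d2_def by simp
  show ?thesis
  proof (cases "d1 k y \<ge> 0")
    case True
    have "0 \<le> Phi (d1 k y) * d1 k y" using True Phi_ge0 by simp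
    moreover have "0 \<le> exp k * Phi (d2 k y) * (- d2 k y)" using d2neg Phi_ge0[of "d2 k y"]
      by (intro mult_nonneg_nonneg) auto
    ultimately show ?thesis by simp
  next
    case False
    have "- d1 k y \<le> - d2 k y" using diff assms by simp
    from M_mono[OF this] have m: "(- d1 k y) * Phi (d1 k y) * exp ((d1 k y)^2/2) \<le> (- d2 k y) * Phi (d2 k y) * exp ((d2 k y)^2/2)"
      by simp
    have sq: "(d2 k y)^2/2 = (d1 k y)^2/2 + k" unfolding d1_def d2_def using assms
      by (simp add: power2_eq_square field_simps)
    have "exp ((d2 k y)^2/2) = exp ((d1 k y)^2/2) * exp k" unfolding sq by (simp add: exp_add)
    with m have "exp ((d1 k y)^2/2) * ((- d1 k y) * Phi (d1 k y)) \<le> exp ((d1 k y)^2/2) * ((- d2 k y) * Phi (d2 k y) * exp k)"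
      by (simp add: mult_ac)
    then have "(- d1 k y) * Phi (d1 k y) \<le> (- d2 k y) * Phi (d2 k y) * exp k"
      by (rule mult_left_le_imp_le) simp
    then show ?thesis by (simp add: algebra_simps)
  qed
qed

lemma d1_deriv: assumes "y \<noteq> 0" shows "(d1 k has_real_derivative k/y^2 + 1/2) (at y)"
  unfolding d1_def[abs_def] using assms
  by (auto intro!: derivative_eq_intros simp: power2_eq_square)

lemma d2_deriv: assumes "y \<noteq> 0" shows "(d2 k has_real_derivative k/y^2 - 1/2) (at y)"
  unfolding d2_def[abs_def] using assms
  by (auto intro!: derivative_eq_intros simp: power2_eq_square)

lemma CBS_deriv: assumes "y > 0" shows "(C_BS k has_real_derivative phi (d1 k y)) (at y)"
proof -
  have "((\<lambda>y. Phi (d1 k y) - exp k * Phi (d2 k y)) has_real_derivative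
     phi (d1 k y) * (k/y^2 + 1/2) - exp k * (phi (d2 k y) * (k/y^2 - 1/2))) (at y)"
    using assms by (intro DERIV_diff DERIV_cmult Phi_deriv_chain d1_deriv d2_deriv) auto
  moreover have "phi (d1 k y) * (k/y^2 + 1/2) - exp k * (phi (d2 k y) * (k/y^2 - 1/2)) = phi (d1 k y)"
  proof -
    have "exp k * (phi (d2 k y) * (k/y^2 - 1/2)) = (exp k * phi (d2 k y)) * (k/y^2 - 1/2)" by simp
    also have "\<dots> = phi (d1 k y) * (k/y^2 - 1/2)" using phi_d1d2[OF assms] by simp
    finally show ?thesis by (simp add: algebra_simps)
  qed
  ultimately show ?thesis unfolding C_BS_def[abs_def] by simp
qed

lemma CD_deriv_nonneg: assumes "y > 0" "k \<ge> 0"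
  shows "\<exists>d. (C_D k has_real_derivative d) (at y) \<and> 0 \<le> d"
proof -
  let ?P = "Phi (d1 k y)"
  have P: "?P > 0" by (rule Phi_pos)
  have "((\<lambda>y. C_BS k y / Phi (d1 k y)) has_real_derivative
    (phi (d1 k y) * ?P - C_BS k y * (phi (d1 k y) * (k/y^2 + 1/2))) / (?P * ?P)) (at y)"
    using P assms by (intro DERIV_divide CBS_deriv derivative_intros d1_deriv) auto
  moreover have "0 \<le> (phi (d1 k y) * ?P - C_BS k y * (phi (d1 k y) * (k/y^2 + 1/2))) / (?P * ?P)"
  proof -
    have e: "y * (?P - C_BS k y * (k/y^2 + 1/2)) = Phi (d1 k y) * d1 k y - exp k * Phi (d2 k y) * d2 k y"
      unfolding C_BS_def d1_def d2_def using assms by (simp add: field_simps power2_eq_square)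
    have "0 \<le> y * (?P - C_BS k y * (k/y^2 + 1/2))" unfolding e using sign_key[OF assms] .
    then have "0 \<le> ?P - C_BS k y * (k/y^2 + 1/2)" using assms by (simp add: zero_le_mult_iff)
    then have "0 \<le> phi (d1 k y) * (?P - C_BS k y * (k/y^2 + 1/2))" by simp
    then show ?thesis by (simp add: algebra_simps)
  qed
  ultimately show ?thesis unfolding C_D_def[abs_def] by blast
qed

lemma CD_mono: assumes "0 < y1" "y1 \<le> y2" "k \<ge> 0" shows "C_D k y1 \<le> C_D k y2"
  by (rule DERIV_nonneg_imp_nondecreasing[OF assms(2)]) (use assms CD_deriv_nonneg in auto)


lemma d1_inv_mono: assumes "x \<le> y" "k \<ge> 0" shows "d1_inv k x \<le> d1_inv k y"
proof -
  let ?s = "sqrt (y\<^sup>2 + 2 * k)"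
  have s0: "?s \<ge> \<bar>y\<bar>" using assms by (simp add: real_le_rsqrt)
  have "x\<^sup>2 + 2 * k \<le> ((y - x) + ?s)\<^sup>2"
  proof -
    have "?s\<^sup>2 = y\<^sup>2 + 2 * k" using assms by (simp add: add_nonneg_nonneg)
    moreover have "0 \<le> (y - x) * (2 * y + 2 * ?s)" using assms s0 by (intro mult_nonneg_nonneg) auto
    ultimately show ?thesis by (simp add: power2_eq_square algebra_simps)
  qed
  then have "sqrt (x\<^sup>2 + 2 * k) \<le> sqrt (((y - x) + ?s)\<^sup>2)" by (rule real_sqrt_le_mono)
  also have "\<dots> = (y - x) + ?s" using assms s0 by simp
  finally show ?thesis unfolding d1_inv_def by simp
qed

lemma d1_inv_d1: assumes "s > 0" "k \<ge> 0" shows "d1_inv k (d1 k s) = s"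
proof -
  have "(d1 k s)\<^sup>2 + 2 * k = (k / s + s / 2)\<^sup>2" unfolding d1_def using assms
    by (simp add: power2_eq_square field_simps)
  moreover have "k / s + s / 2 \<ge> 0" using assms by simp
  ultimately have "sqrt ((d1 k s)\<^sup>2 + 2 * k) = k / s + s / 2" by simp
  then show ?thesis unfolding d1_inv_def by (simp add: d1_def)
qed

theorem corollary5p1:
  fixes k c \<sigma> :: real
  assumes "k \<ge> 0" and "0 < c" and "c < 1"
    and "\<sigma> > 0" and "C_BS k \<sigma> = c"
  shows "L_U23 k c \<le> \<sigma>"
proof -
  define D where "D = min ((1 + c) / 2) (c + exp k * Phi (- sqrt (2 * k)))"
  have E1: "exp k \<ge> 1" using assms(1) by simp
  have "0 < exp k * Phi (- sqrt (2 * k))" using Phi_pos by simp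
  then have Dc: "c < D" using assms unfolding D_def by simp
  have "D \<le> (1 + c) / 2" unfolding D_def by (rule min.cobounded1)
  then have D1: "D < 1" using assms(3) by simp
  define p where "p = (D - c) / exp k"
  have p0: "0 < p" unfolding p_def using Dc by simp
  have "D - c < exp k" using D1 E1 assms(2) by linarith
  then have p1: "p < 1" unfolding p_def by (simp add: divide_less_eq)
  define x where "x = Phi_inv D"
  define z where "z = Phi_inv p"
  have Px: "Phi x = D" unfolding x_def using Dc D1 assms by (intro Phi_Phi_inv) auto
  have Pz: "Phi z = p" unfolding z_def using p0 p1 by (intro Phi_Phi_inv) auto
  have U: "U23 k c = x - z" unfolding U23_def H_def D_def[symmetric] x_def z_def p_def by simp
  have sU: "\<sigma> \<le> U23 k c"
  proof (rule ccontr)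
    assume "\<not> \<sigma> \<le> U23 k c"
    then have "x - \<sigma> < z" using U by simp
    then have "Phi (x - \<sigma>) < p" using Phi_strict_mono Pz by metis
    then have "exp k * Phi (x - \<sigma>) < D - c" unfolding p_def using E1 by (simp add: less_divide_eq mult.commute)
    then have "c < Phi x - exp k * Phi (x - \<sigma>)" using Px by simp
    with G_bound[OF assms(4), of x k] assms(5) show False by simp
  qed
  have CDs: "C_D k \<sigma> = c / Phi (d1 k \<sigma>)" unfolding C_D_def using assms(5) by simp
  have CDs0: "0 < C_D k \<sigma>" unfolding CDs using assms(2) Phi_pos by simp
  have CDU: "C_D k \<sigma> \<le> C_D k (U23 k c)" using CD_mono[OF assms(4) sU assms(1)] .
  define q where "q = c / C_D k (U23 k c)"
  have q0: "0 < q" unfolding q_def using CDs0 CDU assms(2) by simp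
  have "q \<le> c / C_D k \<sigma>" unfolding q_def using CDs0 CDU assms(2)
    by (intro divide_left_mono) auto
  also have "\<dots> = Phi (d1 k \<sigma>)" unfolding CDs using assms(2) Phi_pos[of "d1 k \<sigma>"] by simp
  finally have q1: "q \<le> Phi (d1 k \<sigma>)" .
  have "Phi_inv q \<le> Phi_inv (Phi (d1 k \<sigma>))" using q0 q1 Phi_lt1 by (intro Phi_inv_mono) auto
  then have "Phi_inv q \<le> d1 k \<sigma>" by (simp add: Phi_inv_Phi)
  then have "d1_inv k (Phi_inv q) \<le> d1_inv k (d1 k \<sigma>)" using assms(1) by (rule d1_inv_mono)
  then show ?thesis unfolding L_U23_def q_def[symmetric] using d1_inv_d1[OF assms(4,1)] by simp
qed

end
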